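(* Let $X$ be a finite set, $f:2^X\to\mathbb{R}_{\ge0}$ a normalized monotone submodular function, $k\ge2$ and $n\ge k$ integers with $n\le|X|$, and $S^*\in\arg\max_{S\subseteq X,\,|S|\le n}f(S)$. Let $S=S_n=\{x_1,\dots,x_n\}$ be produced by the $k$-wise optimistic algorithm ($S_0=\emptyset$, $x_i\in\arg\max_{x\in X\setminus S_{i-1}}\bar f_k(x\mid S_{i-1})$, $S_i=S_{i-1}\cup\{x_i\}$), and assume $\bar f_k(x_i\mid S_{i-1})>0$ for $k<i\le n$. Then \[ f(S)\ \ge\ \left(1-e^{-\frac{1}{n}\left(k+\sum_{i=k+1}^n \frac{f(x_i\mid S_{i-1})}{\bar f_k(x_i\mid S_{i-1})}\right)}\right) f(S^* ), \] equivalently $f(S)\ge\left(1-e^{-\frac1n\left(k+\sum_{i=k+1}^n(1-c_k(x_i\mid S_{i-1}))\right)}\right)f(S^* )$.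
   Context: $f(x\mid A):=f(A\cup\{x\})-f(A)$. $k$-wise upper estimate: $\bar f_k(x\mid S):=\min_{A\subseteq S,\,|A|<k} f(x\mid A)$. The $k$-marginal curvature of $f$ at $x\in X\setminus S$ given $S$ is $c_k(x\mid S)=1-\max_{A\subseteq S,|A|<k} f(x\mid S)/f(x\mid A)=1-f(x\mid S)/\bar f_k(x\mid S)$. *)

theory Defs
  imports Complex_Main
begin

definition marg :: "('a set \<Rightarrow> real) \<Rightarrow> 'a \<Rightarrow> 'a set \<Rightarrow> real" where
  "marg f x A = f (A \<union> {x}) - f A"

text \<open>k-wise upper estimate: minimum of f(x | A) over A \<subseteq> S with |A| < k
  (S is finite in all uses, so this is a Min over a finite nonempty set for k \<ge> 1).\<close>
definition fbar :: "nat \<Rightarrow> ('a set \<Rightarrow> real) \<Rightarrow> 'a \<Rightarrow> 'a set \<Rightarrow> real" where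
  "fbar k f x S = Min {marg f x A | A. A \<subseteq> S \<and> card A < k}"

definition normalized :: "('a set \<Rightarrow> real) \<Rightarrow> bool" where
  "normalized f \<longleftrightarrow> f {} = 0"

definition nonneg_on :: "'a set \<Rightarrow> ('a set \<Rightarrow> real) \<Rightarrow> bool" where
  "nonneg_on X f \<longleftrightarrow> (\<forall>A. A \<subseteq> X \<longrightarrow> 0 \<le> f A)"

definition monotone_set_fun :: "'a set \<Rightarrow> ('a set \<Rightarrow> real) \<Rightarrow> bool" where
  "monotone_set_fun X f \<longleftrightarrow> (\<forall>A B. A \<subseteq> B \<and> B \<subseteq> X \<longrightarrow> f A \<le> f B)"

definition submodular :: "'a set \<Rightarrow> ('a set \<Rightarrow> real) \<Rightarrow> bool" where
  "submodular X f \<longleftrightarrow>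
     (\<forall>A B. A \<subseteq> X \<and> B \<subseteq> X \<longrightarrow> f (A \<union> B) + f (A \<inter> B) \<le> f A + f B)"

definition prefix_set :: "(nat \<Rightarrow> 'a) \<Rightarrow> nat \<Rightarrow> 'a set" where
  "prefix_set xs i = xs ` {1..i}"

definition kwise_optimistic :: "'a set \<Rightarrow> ('a set \<Rightarrow> real) \<Rightarrow> nat \<Rightarrow> nat \<Rightarrow> (nat \<Rightarrow> 'a) \<Rightarrow> bool" where
  "kwise_optimistic X f k n xs \<longleftrightarrow>
     (\<forall>i\<in>{1..n}. xs i \<in> X - prefix_set xs (i - 1) \<and>
        (\<forall>y\<in>X - prefix_set xs (i - 1).
            fbar k f y (prefix_set xs (i - 1)) \<le> fbar k f (xs i) (prefix_set xs (i - 1))))"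

end

theory Submission
  imports Defs
begin

lemma marg_anti:
  assumes mono: "monotone_set_fun X f" and sub: "submodular X f"
    and "A \<subseteq> B" "B \<subseteq> X" "x \<in> X"
  shows "marg f x B \<le> marg f x A"
proof (cases "x \<in> B")
  case True
  have "B \<union> {x} = B" using True by auto
  moreover have "f A \<le> f (A \<union> {x})" using mono assms unfolding monotone_set_fun_def
    by (metis Un_least Un_upper1 empty_subsetI insert_subset order_trans)
  ultimately show ?thesis unfolding marg_def by simp
next
  case False
  have "A \<union> {x} \<subseteq> X" using assms by auto
  with sub assms have "f ((A \<union> {x}) \<union> B) + f ((A \<union> {x}) \<inter> B) \<le> f (A \<union> {x}) + f B"
    unfolding submodular_def by blast
  moreover have "(A \<union> {x}) \<union> B = B \<union> {x}" using assms by auto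
  moreover have "(A \<union> {x}) \<inter> B = A" using assms False by auto
  ultimately show ?thesis unfolding marg_def by simp
qed

lemma marg_nonneg:
  assumes mono: "monotone_set_fun X f" and "A \<subseteq> X" "x \<in> X"
  shows "0 \<le> marg f x A"
  using assms unfolding monotone_set_fun_def marg_def
  by (metis Un_least Un_upper1 empty_subsetI insert_subset diff_ge_0_iff_ge)

lemma fbar_set_finite:
  assumes "finite S"
  shows "finite {marg f x A | A. A \<subseteq> S \<and> card A < k}"
proof -
  have "{marg f x A | A. A \<subseteq> S \<and> card A < k} \<subseteq> (\<lambda>A. marg f x A) ` Pow S" by auto
  thus ?thesis using assms finite_subset by blast
qed

lemma fbar_ge:
  assumes mono: "monotone_set_fun X f" and sub: "submodular X f"
    and "finite S" "S \<subseteq> X" "x \<in> X" "1 \<le> k"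
  shows "marg f x S \<le> fbar k f x S"
proof -
  let ?M = "{marg f x A | A. A \<subseteq> S \<and> card A < k}"
  have ne: "?M \<noteq> {}" using assms by (auto intro!: exI[of _ "{}"])
  have "fbar k f x S \<in> ?M" unfolding fbar_def
    using Min_in[OF fbar_set_finite[OF assms(3)] ne] by simp
  then obtain A where "A \<subseteq> S" "fbar k f x S = marg f x A" by auto
  thus ?thesis using marg_anti[OF mono sub, of A S x] assms by auto
qed

lemma fbar_eq:
  assumes mono: "monotone_set_fun X f" and sub: "submodular X f"
    and "finite S" "S \<subseteq> X" "x \<in> X" "card S < k"
  shows "fbar k f x S = marg f x S"
proof -
  have "fbar k f x S \<le> marg f x S" unfolding fbar_def
    using assms by (intro Min_le fbar_set_finite) auto
  moreover have "marg f x S \<le> fbar k f x S" using fbar_ge[OF mono sub] assms by auto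
  ultimately show ?thesis by simp
qed

lemma sum_bound:
  assumes sub: "submodular X f" and mono: "monotone_set_fun X f"
    and "finite T" "T \<subseteq> X" "S \<subseteq> X"
  shows "f (S \<union> T) \<le> f S + (\<Sum>y\<in>T. marg f y S)"
  using assms(3,4)
proof (induction T rule: finite_induct)
  case empty
  then show ?case by simp
next
  case (insert y T)
  have "f (S \<union> insert y T) = f (S \<union> T) + marg f y (S \<union> T)"
    unfolding marg_def by (simp add: Un_insert_right insert_commute)
  also have "marg f y (S \<union> T) \<le> marg f y S"
    using marg_anti[OF mono sub, of S "S \<union> T" y] insert assms by auto
  finally show ?case using insert by simp
qed

lemma prefix_Suc: "prefix_set xs (Suc j) = insert (xs (Suc j)) (prefix_set xs j)"
  unfolding prefix_set_def by (simp add: atLeastAtMostSuc_conv)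

lemma prefix_0: "prefix_set xs 0 = {}"
  unfolding prefix_set_def by simp

lemma prefix_card: "card (prefix_set xs i) \<le> i"
  unfolding prefix_set_def using card_image_le[of "{1..i}" xs] by simp

lemma prefix_finite: "finite (prefix_set xs i)"
  unfolding prefix_set_def by simp

theorem corollary2:
  fixes X :: "'a set" and f :: "'a set \<Rightarrow> real" and k n :: nat
    and xs :: "nat \<Rightarrow> 'a" and Sstar :: "'a set"
  assumes "finite X"
    and "nonneg_on X f" and "normalized f" and "monotone_set_fun X f" and "submodular X f"
    and "2 \<le> k" and "k \<le> n" and "n \<le> card X"
    and "Sstar \<subseteq> X" and "card Sstar \<le> n"
    and "\<forall>T. T \<subseteq> X \<and> card T \<le> n \<longrightarrow> f T \<le> f Sstar"
    and "kwise_optimistic X f k n xs"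
    and "\<forall>i\<in>{k+1..n}. fbar k f (xs i) (prefix_set xs (i - 1)) > 0"
  shows "f (prefix_set xs n) \<ge>
    (1 - exp (- (1 / real n) * (real k + (\<Sum>i = k+1..n.
        marg f (xs i) (prefix_set xs (i - 1)) / fbar k f (xs i) (prefix_set xs (i - 1))))))
    * f Sstar"
proof -
  note mono = assms(4) and sub = assms(5)
  define S where "S = prefix_set xs"
  define OPT where "OPT = f Sstar"
  define D where "D i = OPT - f (S i)" for i
  define fb where "fb i = fbar k f (xs i) (S (i - 1))" for i
  define mg where "mg i = marg f (xs i) (S (i - 1))" for i
  define r where "r i = (if i \<le> k then 1 else mg i / fb i)" for i
  have npos: "0 < n" using assms(6,7) by simp
  have alg: "\<And>i. i \<in> {1..n} \<Longrightarrow> xs i \<in> X - S (i - 1) \<and>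
        (\<forall>y\<in>X - S (i - 1). fbar k f y (S (i - 1)) \<le> fb i)"
    using assms(12) unfolding kwise_optimistic_def S_def fb_def by blast
  have SX: "\<And>i. i \<le> n \<Longrightarrow> S i \<subseteq> X"
    unfolding S_def prefix_set_def using alg unfolding S_def by fastforce
  have Sfin: "\<And>i. finite (S i)" unfolding S_def by (rule prefix_finite)
  have Ssuc: "\<And>i. 1 \<le> i \<Longrightarrow> S i = S (i - 1) \<union> {xs i}"
  proof -
    fix i :: nat assume "1 \<le> i"
    then obtain j where "i = Suc j" by (cases i) auto
    thus "S i = S (i - 1) \<union> {xs i}" unfolding S_def using prefix_Suc[of xs j] by simp
  qed
  have D0: "D 0 = OPT" unfolding D_def S_def prefix_0 using assms(3) unfolding normalized_def by simp
  have OPTnn: "0 \<le> OPT" unfolding OPT_def using assms(2,9) nonneg_on_def by auto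
  have step: "\<And>i. i \<in> {1..n} \<Longrightarrow> D i \<le> (1 - r i / n) * D (i - 1) \<and> 0 \<le> r i \<and> r i \<le> 1"
  proof -
    fix i assume i: "i \<in> {1..n}"
    have xi: "xs i \<in> X" "xs i \<notin> S (i - 1)" using alg[OF i] by auto
    have SXi: "S (i - 1) \<subseteq> X" using SX[of "i - 1"] i by (meson atLeastAtMost_iff diff_le_self le_trans)
    have mgnn: "0 \<le> mg i" unfolding mg_def using marg_nonneg[OF mono SXi xi(1)] .
    have mgfb: "mg i \<le> fb i" unfolding mg_def fb_def
      using fbar_ge[OF mono sub Sfin SXi xi(1)] assms(6) by simp
    have Di: "D i = D (i - 1) - mg i"
      unfolding D_def mg_def marg_def using Ssuc i by auto
    have fSt: "f (S (i - 1) \<union> Sstar) \<le> f (S (i - 1)) + (\<Sum>y\<in>Sstar. marg f y (S (i - 1)))"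
      using sum_bound[OF sub mono _ assms(9) SXi] finite_subset[OF assms(9,1)] by blast
    have "OPT \<le> f (S (i - 1) \<union> Sstar)"
      unfolding OPT_def using mono SXi assms(9) unfolding monotone_set_fun_def by blast
    have each: "\<And>y. y \<in> Sstar \<Longrightarrow> marg f y (S (i - 1)) \<le> fb i"
    proof -
      fix y assume y: "y \<in> Sstar"
      show "marg f y (S (i - 1)) \<le> fb i"
      proof (cases "y \<in> S (i - 1)")
        case True
        then have "marg f y (S (i - 1)) = 0" unfolding marg_def
          by (simp add: insert_absorb)
        then show ?thesis using mgnn mgfb by simp
      next
        case False
        have "y \<in> X - S (i - 1)" using False y assms(9) by auto
        then have "fbar k f y (S (i - 1)) \<le> fb i" using alg[OF i] by blast
        moreover have "marg f y (S (i - 1)) \<le> fbar k f y (S (i - 1))"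
          using fbar_ge[OF mono sub Sfin SXi, of y k] y assms(9,6) by auto
        ultimately show ?thesis by simp
      qed
    qed
    have "(\<Sum>y\<in>Sstar. marg f y (S (i - 1))) \<le> (\<Sum>y\<in>Sstar. fb i)"
      by (rule sum_mono) (rule each)
    also have "\<dots> = card Sstar * fb i" by simp
    also have "\<dots> \<le> n * fb i"
      using assms(10) mgnn mgfb by (intro mult_right_mono) auto
    finally have Dfb: "D (i - 1) \<le> n * fb i"
      unfolding D_def using fSt \<open>OPT \<le> f (S (i - 1) \<union> Sstar)\<close> by linarith
    have mr: "mg i = r i * fb i \<and> 0 \<le> r i \<and> r i \<le> 1"
    proof (cases "i \<le> k")
      case True
      have "card (S (i - 1)) < k" using prefix_card[of xs "i - 1"] True i
        unfolding S_def by auto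
      then have "fb i = mg i" unfolding fb_def mg_def
        using fbar_eq[OF mono sub Sfin SXi xi(1)] by blast
      then show ?thesis unfolding r_def using True by simp
    next
      case False
      have "fb i > 0" using assms(13) False i unfolding fb_def S_def by auto
      then show ?thesis unfolding r_def using False mgnn mgfb by simp
    qed
    have "r i * D (i - 1) \<le> r i * (n * fb i)" using Dfb mr by (intro mult_left_mono) auto
    then have "r i * D (i - 1) / n \<le> mg i" using mr npos by (simp add: field_simps)
    then have "D i \<le> (1 - r i / n) * D (i - 1)" using Di by (simp add: field_simps)
    then show "D i \<le> (1 - r i / n) * D (i - 1) \<and> 0 \<le> r i \<and> r i \<le> 1" using mr by simp
  qed
  have ind: "\<And>m. m \<le> n \<Longrightarrow> D m \<le> exp (- (\<Sum>i=1..m. r i) / n) * OPT"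
  proof -
    fix m show "m \<le> n \<Longrightarrow> D m \<le> exp (- (\<Sum>i=1..m. r i) / n) * OPT"
    proof (induction m)
      case 0
      then show ?case using D0 by simp
    next
      case (Suc m)
      have st: "D (Suc m) \<le> (1 - r (Suc m) / n) * D m" "0 \<le> r (Suc m)" "r (Suc m) \<le> 1"
        using step[of "Suc m"] Suc.prems by auto
      have c: "0 \<le> 1 - r (Suc m) / n" using st npos by (simp add: field_simps)
      have "D (Suc m) \<le> (1 - r (Suc m) / n) * (exp (- (\<Sum>i=1..m. r i) / n) * OPT)"
        using st(1) Suc c by (meson mult_left_mono order_trans Suc_leD)
      also have "\<dots> \<le> exp (- r (Suc m) / n) * (exp (- (\<Sum>i=1..m. r i) / n) * OPT)"
        using exp_ge_add_one_self[of "- r (Suc m) / n"] OPTnn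
        by (intro mult_right_mono) auto
      also have "\<dots> = exp (- (\<Sum>i=1..Suc m. r i) / n) * OPT"
      proof -
        have "(\<Sum>i=1..Suc m. r i) = (\<Sum>i=1..m. r i) + r (Suc m)" by simp
        then have "- (\<Sum>i=1..Suc m. r i) / n = - r (Suc m) / n + - (\<Sum>i=1..m. r i) / n"
          by (simp add: diff_divide_distrib add_divide_distrib)
        then show ?thesis by (simp only: exp_add mult.assoc)
      qed
      finally show ?case .
    qed
  qed
  have sumeq: "(\<Sum>i=1..n. r i) = real k + (\<Sum>i = k+1..n.
        marg f (xs i) (prefix_set xs (i - 1)) / fbar k f (xs i) (prefix_set xs (i - 1)))"
  proof -
    have "(\<Sum>i=1..n. r i) = (\<Sum>i=1..k. r i) + (\<Sum>i=k+1..k+(n-k). r i)"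
      using sum.ub_add_nat[of 1 k r "n - k"] assms(6,7) by simp
    also have "(\<Sum>i=1..k. r i) = real k" unfolding r_def by simp
    also have "(\<Sum>i=k+1..k+(n-k). r i) = (\<Sum>i = k+1..n.
        marg f (xs i) (prefix_set xs (i - 1)) / fbar k f (xs i) (prefix_set xs (i - 1)))"
      using assms(7) by (intro sum.cong) (auto simp: r_def mg_def fb_def S_def)
    finally show ?thesis .
  qed
  have gen: "\<And>a b::real. - a / b = - (1/b) * a" by simp
  have Dn: "D n \<le> exp (- (\<Sum>i=1..n. r i) / n) * OPT" using ind by simp
  have ex: "- (\<Sum>i=1..n. r i) / n = - (1 / real n) * (real k + (\<Sum>i = k+1..n.
        marg f (xs i) (prefix_set xs (i - 1)) / fbar k f (xs i) (prefix_set xs (i - 1))))"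
    unfolding sumeq by (rule gen)
  define E where "E = exp (- (1 / real n) * (real k + (\<Sum>i = k+1..n.
        marg f (xs i) (prefix_set xs (i - 1)) / fbar k f (xs i) (prefix_set xs (i - 1)))))"
  have Dn2: "OPT - f (S n) \<le> E * OPT" using Dn unfolding D_def E_def ex .
  have "(1 - E) * OPT = OPT - E * OPT" by (simp add: algebra_simps)
  then have "(1 - E) * OPT \<le> f (S n)" using Dn2 by linarith
  then show ?thesis unfolding E_def OPT_def S_def .
qed

end
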